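(* For every integer $n\ge1$ and all $u,x,y,z\in\mathbb{C}((t^{1/n}))$ satisfying $x^2-tu^2+t=(u^2t^2-t)y^2\neq0$ and $x^2-2tu^2+t^{-1}=t(u^2t^2-t)z^2\neq0$, the element $u^2t^2-t$ is a square in $\mathbb{C}((t^{1/n}))$. *)

theory Defs
  imports "HOL-Computational_Algebra.Formal_Laurent_Series"
begin

text \<open>The field C((t^(1/n))) is modelled as complex formal Laurent series in the
variable s = t^(1/n) (fls_X); the element t is then s^n.\<close>

definition tpar :: "nat \<Rightarrow> complex fls" where
  "tpar n = fls_X ^ n"

end

theory Submission imports Defs begin

lemma sq_even:
  fixes D :: "complex fls"
  assumes "D \<noteq> 0" "fls_subdegree D = 2 * m"
  shows "\<exists>w. w^2 = D"
proof -
  define g where "g = fls_base_factor_to_fps D"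
  have g0: "g $ 0 \<noteq> 0" using assms(1) unfolding g_def by simp
  define R where "R = fps_radical (\<lambda>k c. csqrt c) (Suc 1) g"
  have "(csqrt (g$0)) ^ Suc 1 = g$0" by (metis power2_csqrt Suc_1)
  hence "R ^ Suc 1 = g" unfolding R_def using power_radical[OF g0, of "\<lambda>k c. csqrt c" 1] by simp
  hence RR: "R * R = g" by (simp add: numeral_2_eq_2)
  define w where "w = fls_shift (-m) (fps_to_fls R)"
  have "w^2 = fls_shift (-m + -m) (fps_to_fls (R*R))"
    unfolding w_def power2_eq_square fls_times_both_shifted_simp by (simp add: fls_times_fps_to_fls)
  also have "\<dots> = D" using RR fls_conv_base_factor_to_fps_shift_subdegree[of D] assms(2)
    unfolding g_def by simp
  finally show ?thesis by blast
qed

lemma dist: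
  fixes f g :: "complex fls"
  assumes "f \<noteq> 0" "g \<noteq> 0" "fls_subdegree f \<noteq> fls_subdegree g"
  shows "f + g \<noteq> 0 \<and> fls_subdegree (f + g) = min (fls_subdegree f) (fls_subdegree g)"
proof
  show "f + g \<noteq> 0"
  proof
    assume "f + g = 0"
    hence "g = - f" by (simp add: add_eq_0_iff)
    thus False using assms(3) by simp
  qed
  show "fls_subdegree (f + g) = min (fls_subdegree f) (fls_subdegree g)"
  proof (cases "fls_subdegree f < fls_subdegree g")
    case True thus ?thesis using fls_subdegree_add_eq1[OF assms(1) True] by simp
  next
    case False
    hence "fls_subdegree g < fls_subdegree f" using assms(3) by simp
    thus ?thesis using fls_subdegree_add_eq2[OF assms(2)] by simp
  qed
qed

lemma lemma9p1:
  fixes n :: nat and u x y z :: "complex fls"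
  assumes "n \<ge> 1"
    and "x^2 - tpar n * u^2 + tpar n = (u^2 * (tpar n)^2 - tpar n) * y^2"
    and "(u^2 * (tpar n)^2 - tpar n) * y^2 \<noteq> 0"
    and "x^2 - 2 * tpar n * u^2 + inverse (tpar n) = tpar n * (u^2 * (tpar n)^2 - tpar n) * z^2"
    and "tpar n * (u^2 * (tpar n)^2 - tpar n) * z^2 \<noteq> 0"
  shows "\<exists>w :: complex fls. w^2 = u^2 * (tpar n)^2 - tpar n"
proof -
  define T where "T = tpar n"
  define D where "D = u^2 * T^2 - T"
  define a where "a = T * u^2"
  define V where "V = (fls_subdegree :: complex fls \<Rightarrow> int)"
  have T0: "T \<noteq> 0" unfolding T_def tpar_def by simp
  have VT: "V T = int n" unfolding V_def T_def tpar_def by simp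
  have iT0: "inverse T \<noteq> 0" using T0 by simp
  have "V (inverse T * T) = 0" using T0 unfolding V_def by simp
  hence ViT: "V (inverse T) = - int n" using T0 iT0 VT unfolding V_def by simp
  have D0: "D \<noteq> 0" and y0: "y \<noteq> 0" using assms(3) unfolding D_def T_def by auto
  have z0: "z \<noteq> 0" using assms(5) by auto
  have Da: "D = T * (a - 1)" unfolding D_def a_def by algebra
  have a1: "a - 1 \<noteq> 0" using D0 Da by auto
  have VD: "V D = int n + V (a - 1)" using Da T0 a1 VT unfolding V_def by simp
  have eq1: "x^2 + (- (D*y^2)) = a - T" using assms(2) unfolding D_def a_def T_def by algebra
  have eq2: "(x^2 - 2*a) + inverse T = T*D*z^2" using assms(4) unfolding D_def a_def T_def by algebra
  have VDy: "V (D*y^2) = V D + 2 * V y" using D0 y0 unfolding V_def by (simp add: fls_subdegree_pow)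
  have VDy': "V (- (D*y^2)) = V D + 2 * V y" using VDy unfolding V_def by simp
  have VTDz: "V (T*D*z^2) = int n + V D + 2 * V z" using D0 z0 T0 VT unfolding V_def by (simp add: fls_subdegree_pow)
  have Vx2: "V (x^2) = 2 * V x" unfolding V_def by (simp add: fls_subdegree_pow)
  have Va: "u \<noteq> 0 \<Longrightarrow> V a = int n + 2 * V u" unfolding a_def using T0 VT unfolding V_def by (simp add: fls_subdegree_pow)
  have a0u: "a \<noteq> 0 \<Longrightarrow> u \<noteq> 0" unfolding a_def by auto
  have Vm1: "V (-1) = 0" unfolding V_def by simp
  show ?thesis
  proof (cases "even (V D)")
    case True
    then obtain m where "V D = 2 * m" by (elim evenE)
    hence "\<exists>w. w^2 = D" using sq_even[OF D0] unfolding V_def by blast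
    thus ?thesis unfolding D_def T_def .
  next
    case odd: False
    show ?thesis
    proof (cases "even n")
      case True
      have "a \<noteq> 0" proof assume "a = 0" thus False using VD odd True unfolding V_def by simp qed
      hence Vae: "even (V a)" using Va a0u True by simp
      have Va0: "V a = 0"
      proof (rule ccontr)
        assume "V a \<noteq> 0"
        hence "V (a + -1) = min (V a) 0" using dist[of a "-1"] `a \<noteq> 0` Vm1 unfolding V_def by simp
        thus False using Vae VD odd True by (simp add: min_def split: if_splits)
      qed
      have VaT: "V (a + - T) = 0" using dist[of a "-T"] `a \<noteq> 0` T0 Va0 VT assms(1) unfolding V_def by simp
      have x0: "x \<noteq> 0"
      proof
        assume "x = 0"
        hence "V (- (D*y^2)) = V (a + - T)" using eq1 by simp
        hence "V D + 2*V y = 0" using VDy' VaT by simp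
        thus False using odd by presburger
      qed
      have ne: "V (x^2) \<noteq> V (- (D*y^2))" using Vx2 VDy' odd by presburger
      have "x^2 \<noteq> 0" "- (D*y^2) \<noteq> 0" using x0 D0 y0 by auto
      hence "V (x^2 + - (D*y^2)) = min (V (x^2)) (V (- (D*y^2)))"
        using dist[of "x^2" "- (D*y^2)"] ne unfolding V_def by blast
      hence Vxp: "V (x^2) \<ge> 0" using eq1 VaT by simp
      have V2a: "V (2*a) = 0" using Va0 `a \<noteq> 0` unfolding V_def by simp
      show ?thesis
      proof (cases "x^2 - 2*a = 0")
        case True
        hence "V (inverse T) = V (T*D*z^2)" using eq2 by simp
        hence "- int n = int n + V D + 2*V z" using ViT VTDz by simp
        hence False using odd `even n` by presburger
        thus ?thesis ..
      next
        case False
        have "V (x^2 - 2*a) \<ge> 0" using fls_subdegree_minus[OF False] Vxp V2a unfolding V_def by simp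
        hence "V ((x^2 - 2*a) + inverse T) = - int n"
          using dist[of "x^2 - 2*a" "inverse T"] False iT0 ViT assms(1) unfolding V_def by simp
        hence "- int n = int n + V D + 2*V z" using eq2 VTDz by simp
        hence False using odd `even n` by presburger
        thus ?thesis ..
      qed
    next
      case False
      have Vapos: "a \<noteq> 0 \<Longrightarrow> V a > 0 \<and> V (a - 1) = 0"
      proof -
        assume "a \<noteq> 0"
        hence Vao: "odd (V a)" using Va a0u False by simp
        hence "V a \<noteq> 0" by presburger
        hence "V (a + -1) = min (V a) 0" using dist[of a "-1"] `a \<noteq> 0` Vm1 unfolding V_def by simp
        hence "V (a - 1) = min (V a) 0" by simp
        moreover have "even (V (a - 1))" using VD odd False by presburger
        ultimately show ?thesis using Vao `V a \<noteq> 0` by (cases "V a < 0") (auto simp: min_def)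
      qed
      have Va1: "V (a - 1) = 0" using Vapos unfolding V_def by (cases "a = 0") auto
      hence VDn: "V D = int n" using VD by simp
      define h where "h = inverse T - 2*a"
      have h0: "h \<noteq> 0 \<and> V h = - int n"
      proof (cases "a = 0")
        case True thus ?thesis using iT0 ViT unfolding h_def by simp
      next
        case False
        have "V (- (2*a)) = V a" using False unfolding V_def by simp
        hence "V (- (2*a)) > 0" using Vapos False by simp
        hence "V (inverse T + - (2*a)) = min (V (inverse T)) (V (- (2*a)))" "inverse T + - (2*a) \<noteq> 0"
          using dist[of "inverse T" "- (2*a)"] iT0 False ViT unfolding V_def by auto
        thus ?thesis using ViT `V (- (2*a)) > 0` unfolding h_def by simp
      qed
      have eq2': "x^2 + h = T*D*z^2" using eq2 unfolding h_def by (simp add: algebra_simps)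
      have x0: "x \<noteq> 0"
      proof
        assume "x = 0"
        hence "- int n = int n + V D + 2*V z" using eq2' h0 VTDz by simp
        thus False using odd by presburger
      qed
      have ne: "V (x^2) \<noteq> V h" using Vx2 h0 False by presburger
      have "x^2 \<noteq> 0" using x0 by simp
      hence "V (x^2 + h) = min (V (x^2)) (V h)" using dist[of "x^2" h] ne h0 unfolding V_def by blast
      hence "min (2 * V x) (- int n) = int n + V D + 2*V z" using eq2' VTDz Vx2 h0 by simp
      hence Vxneg: "2 * V x < - int n" using odd by (cases "2 * V x < - int n") (auto simp: min_def, presburger)
      have ne2: "V (x^2) \<noteq> V (- (D*y^2))" using Vx2 VDy' VDn False by presburger
      have "x^2 \<noteq> 0" "- (D*y^2) \<noteq> 0" using x0 D0 y0 by auto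
      hence "V (x^2 + - (D*y^2)) = min (V (x^2)) (V (- (D*y^2)))" "x^2 + - (D*y^2) \<noteq> 0"
        using dist[of "x^2" "- (D*y^2)"] ne2 unfolding V_def by blast+
      hence aT0: "a - T \<noteq> 0" and VaTneg: "V (a - T) < 0" using eq1 Vx2 Vxneg by auto
      have "V (a - T) > 0"
      proof (cases "a = 0")
        case True thus ?thesis using VT assms(1) unfolding V_def by simp
      next
        case False
        have "V (a - T) \<ge> min (V a) (V T)" using fls_subdegree_minus[OF aT0] unfolding V_def by simp
        thus ?thesis using Vapos False VT assms(1) by (simp add: min_def split: if_splits)
      qed
      hence False using VaTneg by simp
      thus ?thesis ..
    qed
  qed
qed
end
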